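(* Let $G'$ be an antipodal partial cube of rank $r$ and let $G$ be a halfspace of $G'$ (so $G$ is an affine partial cube). Then $G$ has rank at most $r-1$.
   Context: Hypercube $Q_n$: vertex set $\{+,-\}^n$, adjacency = differing in one coordinate. A partial cube is an isometric subgraph $G'$ of $Q_n$ with $n$ minimal; its edges split into $\Theta$-classes $E_f$ (edges flipping coordinate $f$), and the halfspaces $E_f^{+},E_f^{-}$ are the subgraphs induced by the vertices whose coordinate $f$ is $+$, resp. $-$. $G'$ is antipodal if for each vertex the vertex with all coordinates flipped also belongs to $G'$. An affine partial cube is a halfspace of an antipodal partial cube. The contraction $\pi_f$ contracts all edges of $E_f$; the rank of a partial cube is the largest $r$ such that $Q_r$ can be obtained from it by a sequence of contractions. *)

theory Defs
  imports Main
begin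

text \<open>Vertices of the hypercube Q_n are sign vectors, encoded as functions
  nat \<Rightarrow> bool (True = +, False = -) that are False outside the coordinates 0..<n.\<close>

definition cube :: "nat \<Rightarrow> (nat \<Rightarrow> bool) set" where
  "cube n = {x. \<forall>i\<ge>n. \<not> x i}"

definition hamming :: "nat \<Rightarrow> (nat \<Rightarrow> bool) \<Rightarrow> (nat \<Rightarrow> bool) \<Rightarrow> nat" where
  "hamming n x y = card {i. i < n \<and> x i \<noteq> y i}"

definition cube_adj :: "nat \<Rightarrow> (nat \<Rightarrow> bool) \<Rightarrow> (nat \<Rightarrow> bool) \<Rightarrow> bool" where
  "cube_adj n x y \<longleftrightarrow> hamming n x y = 1"

inductive walk :: "('a \<Rightarrow> 'a \<Rightarrow> bool) \<Rightarrow> 'a set \<Rightarrow> 'a \<Rightarrow> 'a \<Rightarrow> nat \<Rightarrow> bool"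
  for adj V where
  walk_refl: "x \<in> V \<Longrightarrow> walk adj V x x 0"
| walk_step: "x \<in> V \<Longrightarrow> adj x y \<Longrightarrow> walk adj V y z k \<Longrightarrow> walk adj V x z (Suc k)"

definition gdist_is :: "('a \<Rightarrow> 'a \<Rightarrow> bool) \<Rightarrow> 'a set \<Rightarrow> 'a \<Rightarrow> 'a \<Rightarrow> nat \<Rightarrow> bool" where
  "gdist_is adj V x y d \<longleftrightarrow> walk adj V x y d \<and> (\<forall>k. walk adj V x y k \<longrightarrow> d \<le> k)"

definition isometric_embedding ::
  "('a \<Rightarrow> 'a \<Rightarrow> bool) \<Rightarrow> 'a set \<Rightarrow> nat \<Rightarrow> ('a \<Rightarrow> nat \<Rightarrow> bool) \<Rightarrow> bool" where
  "isometric_embedding adj V m \<phi> \<longleftrightarrow>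
     (\<forall>x\<in>V. \<phi> x \<in> cube m) \<and>
     (\<forall>x\<in>V. \<forall>y\<in>V. gdist_is adj V x y (hamming m (\<phi> x) (\<phi> y)))"

definition isometric_subgraph :: "nat \<Rightarrow> (nat \<Rightarrow> bool) set \<Rightarrow> bool" where
  "isometric_subgraph n V \<longleftrightarrow> V \<subseteq> cube n \<and> isometric_embedding (cube_adj n) V n id"

definition partial_cube :: "nat \<Rightarrow> (nat \<Rightarrow> bool) set \<Rightarrow> bool" where
  "partial_cube n V \<longleftrightarrow> isometric_subgraph n V \<and>
     (\<forall>m \<phi>. isometric_embedding (cube_adj n) V m \<phi> \<longrightarrow> n \<le> m)"

definition antipode :: "nat \<Rightarrow> (nat \<Rightarrow> bool) \<Rightarrow> (nat \<Rightarrow> bool)" where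
  "antipode n x = (\<lambda>i. if i < n then \<not> x i else False)"

definition antipodal :: "nat \<Rightarrow> (nat \<Rightarrow> bool) set \<Rightarrow> bool" where
  "antipodal n V \<longleftrightarrow> (\<forall>x\<in>V. antipode n x \<in> V)"

definition halfspace :: "(nat \<Rightarrow> bool) set \<Rightarrow> nat \<Rightarrow> bool \<Rightarrow> (nat \<Rightarrow> bool) set" where
  "halfspace V f s = {x \<in> V. x f = s}"

text \<open>Contraction \<pi>_f: contracting the \<Theta>-class E_f amounts to deleting
  coordinate f (we set it to the constant False, keeping the indexing).\<close>
definition contract :: "nat \<Rightarrow> (nat \<Rightarrow> bool) set \<Rightarrow> (nat \<Rightarrow> bool) set" where
  "contract f V = (\<lambda>x. x(f := False)) ` V"

definition contract_seq :: "nat list \<Rightarrow> (nat \<Rightarrow> bool) set \<Rightarrow> (nat \<Rightarrow> bool) set" where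
  "contract_seq fs V = fold contract fs V"

definition iso_to_cube :: "nat \<Rightarrow> (nat \<Rightarrow> bool) set \<Rightarrow> nat \<Rightarrow> bool" where
  "iso_to_cube n W r \<longleftrightarrow> (\<exists>\<phi>. bij_betw \<phi> W (cube r) \<and>
      (\<forall>x\<in>W. \<forall>y\<in>W. cube_adj n x y \<longleftrightarrow> cube_adj r (\<phi> x) (\<phi> y)))"

definition contracts_to_cube :: "nat \<Rightarrow> (nat \<Rightarrow> bool) set \<Rightarrow> nat \<Rightarrow> bool" where
  "contracts_to_cube n V r \<longleftrightarrow>
     (\<exists>fs. (\<forall>f\<in>set fs. f < n) \<and> iso_to_cube n (contract_seq fs V) r)"

definition has_rank :: "nat \<Rightarrow> (nat \<Rightarrow> bool) set \<Rightarrow> nat \<Rightarrow> bool" where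
  "has_rank n V r \<longleftrightarrow> contracts_to_cube n V r \<and> (\<forall>r'. contracts_to_cube n V r' \<longrightarrow> r' \<le> r)"

end

theory Submission
  imports Defs
begin

definition flp :: "nat \<Rightarrow> (nat \<Rightarrow> bool) \<Rightarrow> (nat \<Rightarrow> bool)" where
  "flp p x = x(p := \<not> x p)"

definition flipset :: "nat set \<Rightarrow> (nat \<Rightarrow> bool) \<Rightarrow> (nat \<Rightarrow> bool)" where
  "flipset S x = (\<lambda>i. if i \<in> S then \<not> x i else x i)"

definition ind :: "nat set \<Rightarrow> (nat \<Rightarrow> bool)" where
  "ind J = (\<lambda>i. i \<in> J)"

definition zer :: "nat set \<Rightarrow> (nat \<Rightarrow> bool) \<Rightarrow> (nat \<Rightarrow> bool)" where
  "zer S x = (\<lambda>i. if i \<in> S then False else x i)"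

lemma adj_flip:
  assumes "x \<in> cube n" "y \<in> cube n"
  shows "cube_adj n x y \<longleftrightarrow> (\<exists>p<n. y = flp p x)"
proof
  assume "cube_adj n x y"
  then have "card {i. i < n \<and> x i \<noteq> y i} = 1" by (simp add: cube_adj_def hamming_def)
  then obtain p where p: "{i. i < n \<and> x i \<noteq> y i} = {p}" by (meson card_1_singletonE)
  then have "p < n" "x p \<noteq> y p" by auto
  moreover have "y = flp p x"
  proof
    fix i show "y i = flp p x i"
    proof (cases "i = p")
      case True then show ?thesis using \<open>x p \<noteq> y p\<close> by (auto simp: flp_def)
    next
      case False
      show ?thesis
      proof (cases "i < n")
        case True then show ?thesis using p False by (auto simp: flp_def)
      next
        case F2: False then show ?thesis using assms False by (auto simp: flp_def cube_def)
      qed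
    qed
  qed
  ultimately show "\<exists>p<n. y = flp p x" by blast
next
  assume "\<exists>p<n. y = flp p x"
  then obtain p where "p < n" "y = flp p x" by blast
  then have "{i. i < n \<and> x i \<noteq> y i} = {p}" by (auto simp: flp_def)
  then show "cube_adj n x y" by (simp add: cube_adj_def hamming_def)
qed

lemma square:
  assumes "b = flp p a" "d = flp q a" "p \<noteq> q" "u = flp p' b" "u = flp q' d" "u \<noteq> a"
  shows "u = flp q b"
proof -
  have e: "\<And>i. (a i \<noteq> (i = p)) \<noteq> (i = p') = ((a i \<noteq> (i = q)) \<noteq> (i = q'))"
  proof -
    fix i
    have 1: "u i = ((a i \<noteq> (i = p)) \<noteq> (i = p'))" using assms(1,4) by (auto simp: flp_def)
    have 2: "u i = ((a i \<noteq> (i = q)) \<noteq> (i = q'))" using assms(2,5) by (auto simp: flp_def)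
    show "(a i \<noteq> (i = p)) \<noteq> (i = p') = ((a i \<noteq> (i = q)) \<noteq> (i = q'))"
      using 1 2 by simp
  qed
  have "p \<noteq> p'"
  proof
    assume "p = p'" then have "u = a" using assms(1,4) by (auto simp: flp_def)
    then show False using assms(6) by simp
  qed
  then have "q' = p" using e[of p] assms(3) by auto
  then show ?thesis using assms(1,2,5) by (auto simp: flp_def fun_eq_iff)
qed

lemma ind_cube: "J \<subseteq> {..<k} \<Longrightarrow> ind J \<in> cube k"
  by (auto simp: ind_def cube_def)

lemma ind_adj: "j < k \<Longrightarrow> j \<notin> J \<Longrightarrow> cube_adj k (ind J) (ind (insert j J))"
proof -
  assume "j < k" "j \<notin> J"
  then have "{i. i < k \<and> ind J i \<noteq> ind (insert j J) i} = {j}" by (auto simp: ind_def)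
  then show ?thesis by (simp add: cube_adj_def hamming_def)
qed

lemma ind_inj: "ind J = ind J' \<Longrightarrow> J = J'"
  by (auto simp: ind_def fun_eq_iff)

lemma contract_seq_zer: "contract_seq fs V = zer (set fs) ` V"
proof (induction fs arbitrary: V)
  case Nil then show ?case by (simp add: contract_seq_def zer_def)
next
  case (Cons a fs)
  have "contract_seq (a # fs) V = contract_seq fs (contract a V)"
    by (simp add: contract_seq_def)
  also have "\<dots> = zer (set fs) ` (contract a V)" by (rule Cons.IH)
  also have "\<dots> = zer (set (a # fs)) ` V"
    unfolding contract_def image_image by (rule image_cong) (auto simp: zer_def fun_eq_iff)
  finally show ?case .
qed


lemma flp_flipset: "i \<notin> S \<Longrightarrow> flp i (flipset S x) = flipset (insert i S) x"
  by (auto simp: flp_def flipset_def fun_eq_iff)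

lemma subcube:
  assumes W: "W \<subseteq> cube n" and bij: "bij_betw \<phi> W (cube k)"
    and adj: "\<forall>x\<in>W. \<forall>y\<in>W. cube_adj n x y \<longleftrightarrow> cube_adj k (\<phi> x) (\<phi> y)"
  shows "\<exists>c w0. inj_on c {..<k} \<and> (\<forall>j<k. c j < n \<and> flp (c j) w0 \<in> W) \<and> w0 \<in> W
     \<and> (\<forall>J \<subseteq> {..<k}. flipset (c ` J) w0 \<in> W)"
proof -
  define \<psi> where "\<psi> = inv_into W \<phi>"
  have \<psi>W: "\<And>v. v \<in> cube k \<Longrightarrow> \<psi> v \<in> W"
    unfolding \<psi>_def using bij by (metis bij_betw_def inv_into_into)
  have \<phi>\<psi>: "\<And>v. v \<in> cube k \<Longrightarrow> \<phi> (\<psi> v) = v"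
    unfolding \<psi>_def using bij by (metis bij_betw_def f_inv_into_f)
  have \<psi>adj: "\<And>v v'. v \<in> cube k \<Longrightarrow> v' \<in> cube k \<Longrightarrow> cube_adj n (\<psi> v) (\<psi> v') \<longleftrightarrow> cube_adj k v v'"
  proof -
    fix v v' assume "v \<in> cube k" "v' \<in> cube k"
    then show "cube_adj n (\<psi> v) (\<psi> v') \<longleftrightarrow> cube_adj k v v'"
      using adj \<psi>W[of v] \<psi>W[of v'] \<phi>\<psi>[of v] \<phi>\<psi>[of v'] by simp
  qed
  have \<psi>inj: "\<And>v v'. v \<in> cube k \<Longrightarrow> v' \<in> cube k \<Longrightarrow> \<psi> v = \<psi> v' \<Longrightarrow> v = v'"
    using \<phi>\<psi> by (metis (no_types))
  have \<psi>c: "\<And>v. v \<in> cube k \<Longrightarrow> \<psi> v \<in> cube n" using \<psi>W W by blast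
  define w0 where "w0 = \<psi> (ind {})"
  have w0c: "ind {} \<in> cube k" by (rule ind_cube) simp
  have ex: "\<exists>p<n. \<psi> (ind {j}) = flp p w0" if "j < k" for j
  proof -
    have "ind {j} \<in> cube k" using that by (intro ind_cube) auto
    moreover have "cube_adj k (ind {}) (ind {j})" using ind_adj[of j k "{}"] that by simp
    ultimately have "cube_adj n w0 (\<psi> (ind {j}))" unfolding w0_def using \<psi>adj w0c by blast
    then show ?thesis using adj_flip \<psi>c w0c \<open>ind {j} \<in> cube k\<close> unfolding w0_def by blast
  qed
  define c where "c j = (SOME p. p < n \<and> \<psi> (ind {j}) = flp p w0)" for j
  have c: "c j < n \<and> \<psi> (ind {j}) = flp (c j) w0" if "j < k" for j
    unfolding c_def using someI_ex[OF ex[OF that]] .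
  have inj: "inj_on c {..<k}"
  proof (rule inj_onI)
    fix i j assume "i \<in> {..<k}" "j \<in> {..<k}" "c i = c j"
    then have "\<psi> (ind {i}) = \<psi> (ind {j})" using c by auto
    moreover have "ind {i} \<in> cube k" "ind {j} \<in> cube k"
      using \<open>i \<in> {..<k}\<close> \<open>j \<in> {..<k}\<close> by (auto intro!: ind_cube)
    ultimately have "ind {i} = ind {j}" using \<psi>inj by blast
    then show "i = j" using ind_inj by blast
  qed
  have main: "\<psi> (ind J) = flipset (c ` J) w0 \<and>
     (\<forall>j<k. j \<notin> J \<longrightarrow> \<psi> (ind (insert j J)) = flp (c j) (\<psi> (ind J)))"
    if "finite J" "J \<subseteq> {..<k}" for J
    using that
  proof (induction J rule: finite_induct)
    case empty
    show ?case using c by (auto simp: w0_def flipset_def)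
  next
    case (insert i J)
    have IH1: "\<psi> (ind J) = flipset (c ` J) w0" and
      IH2: "\<And>j. j < k \<Longrightarrow> j \<notin> J \<Longrightarrow> \<psi> (ind (insert j J)) = flp (c j) (\<psi> (ind J))"
      using insert by auto
    have ik: "i < k" and Jk: "J \<subseteq> {..<k}" using insert by auto
    have ciJ: "c i \<notin> c ` J" using inj ik Jk insert(2) by (auto simp: inj_on_def)
    have Q: "\<psi> (ind (insert i J)) = flipset (c ` insert i J) w0"
      using IH2[OF ik insert(2)] IH1 flp_flipset[OF ciJ] by simp
    have R: "\<psi> (ind (insert j (insert i J))) = flp (c j) (\<psi> (ind (insert i J)))"
      if jk: "j < k" and jn: "j \<notin> insert i J" for j
    proof -
      define a where "a = \<psi> (ind J)"
      define b where "b = \<psi> (ind (insert i J))"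
      define d where "d = \<psi> (ind (insert j J))"
      define u where "u = \<psi> (ind (insert j (insert i J)))"
      have cJ: "ind J \<in> cube k" using Jk by (rule ind_cube)
      have cb: "ind (insert i J) \<in> cube k" using Jk ik by (intro ind_cube) auto
      have cd: "ind (insert j J) \<in> cube k" using Jk jk by (intro ind_cube) auto
      have cu: "ind (insert j (insert i J)) \<in> cube k" using Jk jk ik by (intro ind_cube) auto
      have bf: "b = flp (c i) a" unfolding a_def b_def using IH2[OF ik insert(2)] .
      have df: "d = flp (c j) a" unfolding a_def d_def using IH2[OF jk] jn by simp
      have "cube_adj k (ind (insert i J)) (ind (insert j (insert i J)))"
        using ind_adj[OF jk jn] .
      then have "cube_adj n b u" unfolding b_def u_def using \<psi>adj cb cu by blast
      then obtain p' where p': "u = flp p' b" using adj_flip \<psi>c cb cu unfolding b_def u_def by blast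
      have "insert j (insert i J) = insert i (insert j J)" by auto
      moreover have "i \<notin> insert j J" using jn insert(2) by blast
      ultimately have "cube_adj k (ind (insert j J)) (ind (insert j (insert i J)))"
        using ind_adj[OF ik, of "insert j J"] by simp
      then have "cube_adj n d u" unfolding d_def u_def using \<psi>adj cd cu by blast
      then obtain q' where q': "u = flp q' d" using adj_flip \<psi>c cd cu unfolding d_def u_def by blast
      have "c i \<noteq> c j" using inj ik jk jn by (auto simp: inj_on_def)
      have "u \<noteq> a"
      proof
        assume "u = a"
        then have "\<psi> (ind (insert j (insert i J))) = \<psi> (ind J)" unfolding u_def a_def .
        then have "ind (insert j (insert i J)) = ind J" using \<psi>inj[OF cu cJ] by blast
        then have "insert j (insert i J) = J" by (rule ind_inj)
        then show False using jn by blast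
      qed
      then have "u = flp (c j) b" using square[OF bf df \<open>c i \<noteq> c j\<close> p' q'] by blast
      then show ?thesis unfolding u_def b_def .
    qed
    show ?case using Q R by blast
  qed
  show ?thesis
  proof (intro exI conjI allI impI)
    show "inj_on c {..<k}" by (rule inj)
    show "w0 \<in> W" unfolding w0_def using \<psi>W w0c .
    fix j assume "j < k"
    then show "c j < n" using c by blast
    have "ind {j} \<in> cube k" using \<open>j < k\<close> by (intro ind_cube) auto
    then show "flp (c j) w0 \<in> W" using c[OF \<open>j < k\<close>] \<psi>W[of "ind {j}"] by simp
  next
    fix J :: "nat set" assume "J \<subseteq> {..<k}"
    moreover have "finite J" using \<open>J \<subseteq> {..<k}\<close> finite_subset by blast
    ultimately show "flipset (c ` J) w0 \<in> W" using main[of J] \<psi>W[OF ind_cube[of J k]] by simp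
  qed
qed


theorem mainTheorem17:
  fixes n r f :: nat and V :: "(nat \<Rightarrow> bool) set" and s :: bool
  assumes "partial_cube n V"
    and "antipodal n V"
    and "has_rank n V r"
    and "f < n"
  shows "\<forall>r'. contracts_to_cube n (halfspace V f s) r' \<longrightarrow> r' \<le> r - 1"
proof (intro allI impI)
  fix r' assume hc: "contracts_to_cube n (halfspace V f s) r'"
  define H where "H = halfspace V f s"
  have Vc: "V \<subseteq> cube n" using assms(1) by (simp add: partial_cube_def isometric_subgraph_def)
  have HV: "H \<subseteq> V" by (auto simp: H_def halfspace_def)
  have Hf: "\<And>h. h \<in> H \<Longrightarrow> h f = s" by (auto simp: H_def halfspace_def)
  obtain fs \<phi> where bij: "bij_betw \<phi> (zer (set fs) ` H) (cube r')"
    and adj: "\<forall>x\<in>zer (set fs) ` H. \<forall>y\<in>zer (set fs) ` H. cube_adj n x y \<longleftrightarrow> cube_adj r' (\<phi> x) (\<phi> y)"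
    using hc unfolding contracts_to_cube_def iso_to_cube_def contract_seq_zer H_def by blast
  define W where "W = zer (set fs) ` H"
  have Wc: "W \<subseteq> cube n" using Vc HV by (auto simp: W_def zer_def cube_def)
  obtain c w0 where inj: "inj_on c {..<r'}" and cn: "\<And>j. j < r' \<Longrightarrow> c j < n \<and> flp (c j) w0 \<in> W"
    and w0W: "w0 \<in> W" and fsW: "\<And>J. J \<subseteq> {..<r'} \<Longrightarrow> flipset (c ` J) w0 \<in> W"
    using subcube[OF Wc bij[folded W_def] adj[folded W_def]] by blast
  define C where "C = c ` {..<r'}"
  have Wf: "\<And>w. w \<in> W \<Longrightarrow> w f = (if f \<in> set fs then False else s)"
    using Hf by (auto simp: W_def zer_def)
  have Wfs: "\<And>w i. w \<in> W \<Longrightarrow> i \<in> set fs \<Longrightarrow> \<not> w i"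
    by (auto simp: W_def zer_def)
  have fC: "c j \<noteq> f \<and> c j \<notin> set fs" if "j < r'" for j
  proof -
    have a: "flp (c j) w0 \<in> W" using cn[OF that] by blast
    show ?thesis
    proof
      show "c j \<noteq> f"
      proof
        assume "c j = f"
        then show False using Wf[OF a] Wf[OF w0W] by (simp add: flp_def split: if_splits)
      qed
      show "c j \<notin> set fs"
      proof
        assume "c j \<in> set fs"
        then show False using Wfs[OF a, of "c j"] Wfs[OF w0W, of "c j"] by (simp add: flp_def)
      qed
    qed
  qed
  have pat: "\<exists>h\<in>H. \<forall>j<r'. h (c j) = g j" for g
  proof -
    define J where "J = {j. j < r' \<and> g j \<noteq> w0 (c j)}"
    have Jk: "J \<subseteq> {..<r'}" by (auto simp: J_def)
    have "flipset (c ` J) w0 \<in> W" using fsW[OF Jk] .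
    then obtain h where h: "h \<in> H" "flipset (c ` J) w0 = zer (set fs) h" by (auto simp: W_def)
    have "h (c j) = g j" if "j < r'" for j
    proof -
      have "c j \<in> c ` J \<longleftrightarrow> j \<in> J"
        using inj Jk that by (meson inj_on_image_mem_iff lessThan_iff)
      then have "flipset (c ` J) w0 (c j) = g j" by (auto simp: flipset_def J_def that)
      moreover have "zer (set fs) h (c j) = h (c j)" using fC[OF that] by (simp add: zer_def)
      ultimately show ?thesis using h(2) by metis
    qed
    then show ?thesis using h(1) by blast
  qed
  have Cn: "\<And>i. i \<in> C \<Longrightarrow> i < n" using cn by (auto simp: C_def)
  have fnC: "f \<notin> C" using fC by (auto simp: C_def)
  define fs2 where "fs2 = filter (\<lambda>i. i \<notin> C \<and> i \<noteq> f) [0..<n]"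
  have set2: "set fs2 = {i. i < n \<and> i \<notin> C \<and> i \<noteq> f}" by (auto simp: fs2_def)
  define P where "P = {y. \<forall>i. i \<notin> C \<and> i \<noteq> f \<longrightarrow> \<not> y i}"
  have eq: "contract_seq fs2 V = P"
  proof
    show "contract_seq fs2 V \<subseteq> P"
      using Vc by (auto simp: contract_seq_zer set2 P_def zer_def cube_def)
  next
    show "P \<subseteq> contract_seq fs2 V"
    proof
      fix y assume yP: "y \<in> P"
      have yo: "\<And>i. i \<notin> C \<Longrightarrow> i \<noteq> f \<Longrightarrow> \<not> y i" using yP by (auto simp: P_def)
      show "y \<in> contract_seq fs2 V"
      proof (cases "y f = s")
        case True
        obtain h where h: "h \<in> H" "\<And>j. j < r' \<Longrightarrow> h (c j) = y (c j)" using pat[of "\<lambda>j. y (c j)"] by blast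
        have hc: "h \<in> cube n" using h(1) HV Vc by blast
        have "zer (set fs2) h = y"
        proof
          fix i show "zer (set fs2) h i = y i"
          proof (cases "i \<in> C")
            case True
            then obtain j where "j < r'" "i = c j" by (auto simp: C_def)
            then show ?thesis using h(2) True by (simp add: zer_def set2)
          next
            case F: False
            show ?thesis
            proof (cases "i = f")
              case True then show ?thesis using Hf[OF h(1)] \<open>y f = s\<close> by (simp add: zer_def set2)
            next
              case False
              then show ?thesis using F yo hc by (auto simp: zer_def set2 cube_def)
            qed
          qed
        qed
        then show ?thesis using h(1) HV by (auto simp: contract_seq_zer)
      next
        case False
        obtain h where h: "h \<in> H" "\<And>j. j < r' \<Longrightarrow> h (c j) = (\<not> y (c j))" using pat[of "\<lambda>j. \<not> y (c j)"] by blast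
        have hV: "h \<in> V" using h(1) HV by blast
        define x where "x = antipode n h"
        have xV: "x \<in> V" using assms(2) hV by (simp add: antipodal_def x_def)
        have "zer (set fs2) x = y"
        proof
          fix i show "zer (set fs2) x i = y i"
          proof (cases "i \<in> C")
            case True
            then obtain j where "j < r'" "i = c j" by (auto simp: C_def)
            then show ?thesis using h(2) True Cn by (simp add: zer_def set2 x_def antipode_def)
          next
            case F: False
            show ?thesis
            proof (cases "i = f")
              case True then show ?thesis using Hf[OF h(1)] \<open>y f \<noteq> s\<close> assms(4)
                by (auto simp: zer_def set2 x_def antipode_def)
            next
              case False
              then show ?thesis using F yo by (auto simp: zer_def set2 x_def antipode_def)
            qed
          qed
        qed
        then show ?thesis using xV by (auto simp: contract_seq_zer)
      qed
    qed
  qed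
  define \<chi> where "\<chi> y = (\<lambda>i. if i < r' then y (c i) else if i = r' then y f else False)" for y :: "nat \<Rightarrow> bool"
  have injP: "inj_on \<chi> P"
  proof (rule inj_onI)
    fix y y' assume "y \<in> P" "y' \<in> P" "\<chi> y = \<chi> y'"
    show "y = y'"
    proof
      fix i show "y i = y' i"
      proof (cases "i \<in> C")
        case True
        then obtain j where "j < r'" "i = c j" by (auto simp: C_def)
        then show ?thesis using fun_cong[OF \<open>\<chi> y = \<chi> y'\<close>, of j] by (simp add: \<chi>_def)
      next
        case False
        show ?thesis
        proof (cases "i = f")
          case True then show ?thesis using fun_cong[OF \<open>\<chi> y = \<chi> y'\<close>, of r'] by (simp add: \<chi>_def)
        next
          case F2: False then show ?thesis using False \<open>y \<in> P\<close> \<open>y' \<in> P\<close> by (auto simp: P_def)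
        qed
      qed
    qed
  qed
  have imP: "\<chi> ` P = cube (Suc r')"
  proof
    show "\<chi> ` P \<subseteq> cube (Suc r')" by (auto simp: \<chi>_def cube_def)
  next
    show "cube (Suc r') \<subseteq> \<chi> ` P"
    proof
      fix v assume v: "v \<in> cube (Suc r')"
      define y where "y i = (if i \<in> C then v (inv_into {..<r'} c i) else if i = f then v r' else False)" for i
      have "y \<in> P" by (auto simp: y_def P_def)
      moreover have "\<chi> y = v"
      proof
        fix i show "\<chi> y i = v i"
        proof (cases "i < r'")
          case True
          then have "c i \<in> C" by (auto simp: C_def)
          moreover have "inv_into {..<r'} c (c i) = i" using inj True by (simp add: inv_into_f_f)
          ultimately show ?thesis using True by (simp add: \<chi>_def y_def)
        next
          case False
          then show ?thesis using fnC v by (auto simp: \<chi>_def y_def cube_def)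
        qed
      qed
      ultimately show "v \<in> \<chi> ` P" by blast
    qed
  qed
  define g where "g i = (if i < r' then c i else f)" for i
  have injg: "inj_on g {..<Suc r'}"
  proof (rule inj_onI)
    fix i j assume "i \<in> {..<Suc r'}" "j \<in> {..<Suc r'}" "g i = g j"
    then show "i = j" using inj fC unfolding g_def
      by (auto simp: inj_on_def split: if_splits)
  qed
  have ham: "hamming n y y' = hamming (Suc r') (\<chi> y) (\<chi> y')" if "y \<in> P" "y' \<in> P" for y y'
  proof -
    have "{i. i < n \<and> y i \<noteq> y' i} = g ` {i. i < Suc r' \<and> \<chi> y i \<noteq> \<chi> y' i}"
    proof
      show "{i. i < n \<and> y i \<noteq> y' i} \<subseteq> g ` {i. i < Suc r' \<and> \<chi> y i \<noteq> \<chi> y' i}"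
      proof
        fix i assume i: "i \<in> {i. i < n \<and> y i \<noteq> y' i}"
        show "i \<in> g ` {i. i < Suc r' \<and> \<chi> y i \<noteq> \<chi> y' i}"
        proof (cases "i \<in> C")
          case True
          then obtain j where "j < r'" "i = c j" by (auto simp: C_def)
          then show ?thesis using i by (auto simp: g_def \<chi>_def image_iff intro!: bexI[of _ j])
        next
          case False
          then have "i = f" using i that by (auto simp: P_def)
          then show ?thesis using i by (auto simp: g_def \<chi>_def image_iff intro!: bexI[of _ r'])
        qed
      qed
      show "g ` {i. i < Suc r' \<and> \<chi> y i \<noteq> \<chi> y' i} \<subseteq> {i. i < n \<and> y i \<noteq> y' i}"
        using cn assms(4) by (auto simp: g_def \<chi>_def split: if_splits)
    qed
    moreover have "inj_on g {i. i < Suc r' \<and> \<chi> y i \<noteq> \<chi> y' i}"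
      using injg by (rule inj_on_subset) auto
    ultimately show ?thesis unfolding hamming_def by (simp add: card_image)
  qed
  have "iso_to_cube n P (Suc r')"
    unfolding iso_to_cube_def
  proof (intro exI conjI ballI)
    show "bij_betw \<chi> P (cube (Suc r'))" using injP imP by (simp add: bij_betw_def)
    fix x y assume "x \<in> P" "y \<in> P"
    then show "cube_adj n x y = cube_adj (Suc r') (\<chi> x) (\<chi> y)" using ham by (simp add: cube_adj_def)
  qed
  then have "contracts_to_cube n V (Suc r')"
    unfolding contracts_to_cube_def using eq set2 by (intro exI[of _ fs2]) auto
  then have "Suc r' \<le> r" using assms(3) by (simp add: has_rank_def)
  then show "r' \<le> r - 1" by simp
qed

end
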